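(* Let $G$ be a graph of order $n$. If $\alpha(G)\ge n-F(D_n)$, then $G$ is Diophantine.
   Context: A graph $G$ with $n$ vertices is Diophantine if there is a bijection $f:V(G)\to\{1,\dots,n\}$ with $\gcd(f(u),f(v))\mid n$ for every edge $uv$. $D_n$ is the graph on $\{1,\dots,n\}$ with distinct $a,b$ adjacent iff $\gcd(a,b)\mid n$ (the maximal Diophantine graph of order $n$). $\alpha(G)$ is the independence number of $G$, and $F(D_n)$ is the number of vertices of degree $n-1$ in $D_n$. *)

theory Defs
  imports Main
begin

definition simple_graph :: "'a set \<Rightarrow> ('a \<Rightarrow> 'a \<Rightarrow> bool) \<Rightarrow> bool" where
  "simple_graph V E \<longleftrightarrow> finite V \<and> (\<forall>u v. E u v \<longrightarrow> u \<in> V \<and> v \<in> V)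
     \<and> (\<forall>u v. E u v \<longrightarrow> E v u) \<and> (\<forall>u. \<not> E u u)"

definition diophantine :: "'a set \<Rightarrow> ('a \<Rightarrow> 'a \<Rightarrow> bool) \<Rightarrow> bool" where
  "diophantine V E \<longleftrightarrow> (\<exists>f :: 'a \<Rightarrow> nat. bij_betw f V {1..card V} \<and>
     (\<forall>u v. E u v \<longrightarrow> gcd (f u) (f v) dvd card V))"

definition independent_set :: "'a set \<Rightarrow> ('a \<Rightarrow> 'a \<Rightarrow> bool) \<Rightarrow> 'a set \<Rightarrow> bool" where
  "independent_set V E S \<longleftrightarrow> S \<subseteq> V \<and> (\<forall>u\<in>S. \<forall>v\<in>S. \<not> E u v)"

definition independence_number :: "'a set \<Rightarrow> ('a \<Rightarrow> 'a \<Rightarrow> bool) \<Rightarrow> nat" where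
  "independence_number V E = Max (card ` {S. independent_set V E S})"

definition D_adj :: "nat \<Rightarrow> nat \<Rightarrow> nat \<Rightarrow> bool" where
  "D_adj n a b \<longleftrightarrow> a \<in> {1..n} \<and> b \<in> {1..n} \<and> a \<noteq> b \<and> gcd a b dvd n"

definition F_D :: "nat \<Rightarrow> nat" where
  "F_D n = card {a \<in> {1..n}. card {b \<in> {1..n}. D_adj n a b} = n - 1}"

end

theory Submission
  imports Defs
begin

lemma full_deg:
  assumes "a \<in> {1..n}" "card {b \<in> {1..n}. D_adj n a b} = n - 1"
    and "b \<in> {1..n}" "b \<noteq> a"
  shows "gcd a b dvd n"
proof -
  have sub: "{b \<in> {1..n}. D_adj n a b} \<subseteq> {1..n} - {a}" by (auto simp: D_adj_def)
  have "card ({1..n} - {a}) = n - 1" using assms(1) by simp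
  hence "{b \<in> {1..n}. D_adj n a b} = {1..n} - {a}"
    using card_subset_eq[OF _ sub] assms(2) by simp
  hence "b \<in> {b \<in> {1..n}. D_adj n a b}" using assms(3,4) by blast
  thus ?thesis by (simp add: D_adj_def)
qed

theorem mainTheorem13:
  fixes V :: "'a set" and E :: "'a \<Rightarrow> 'a \<Rightarrow> bool" and n :: nat
  assumes "simple_graph V E"
    and "card V = n"
    and "independence_number V E \<ge> n - F_D n"
  shows "diophantine V E"
proof -
  have finV: "finite V" using assms(1) by (simp add: simple_graph_def)
  have irr: "\<And>u. \<not> E u u" and inV: "\<And>u v. E u v \<Longrightarrow> u \<in> V \<and> v \<in> V"
    and sym: "\<And>u v. E u v \<Longrightarrow> E v u"
    using assms(1) by (auto simp: simple_graph_def)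
  let ?C = "card ` {S. independent_set V E S}"
  have finC: "finite ?C"
  proof -
    have "{S. independent_set V E S} \<subseteq> Pow V" by (auto simp: independent_set_def)
    hence "finite {S. independent_set V E S}" using finV finite_subset by blast
    thus ?thesis by simp
  qed
  have neC: "?C \<noteq> {}"
  proof -
    have "independent_set V E {}" by (simp add: independent_set_def)
    thus ?thesis by blast
  qed
  have "independence_number V E \<in> ?C" unfolding independence_number_def
    using Max_in[OF finC neC] .
  then obtain I where I: "independent_set V E I" "card I = independence_number V E" by auto
  have IV: "I \<subseteq> V" and Iind: "\<And>u v. u \<in> I \<Longrightarrow> v \<in> I \<Longrightarrow> \<not> E u v"
    using I(1) by (auto simp: independent_set_def)
  define S where "S = {a \<in> {1..n}. card {b \<in> {1..n}. D_adj n a b} = n - 1}"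
  have FS: "F_D n = card S" by (simp add: S_def F_D_def)
  define T where "T = V - I"
  have finT: "finite T" and finI: "finite I" using finV IV finite_subset by (auto simp: T_def)
  have cT: "card T = n - card I" using assms(2) IV finV by (simp add: T_def card_Diff_subset finite_subset)
  have "card T \<le> card S" using cT I(2) assms(3) FS by linarith
  then obtain S' where S': "S' \<subseteq> S" "card S' = card T"
    using obtain_subset_with_card_n by metis
  have finS: "finite S" by (simp add: S_def)
  have SS: "S \<subseteq> {1..n}" by (auto simp: S_def)
  have finS': "finite S'" using S' finS finite_subset by blast
  obtain h where h: "bij_betw h T S'" using finite_same_card_bij[OF finT finS'] S'(2) by metis
  have "card ({1..n} - S') = card I"
    using S' SS assms(2) cT IV finV card_mono[OF finV IV]
    by (simp add: card_Diff_subset finS')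
  then obtain k where k: "bij_betw k I ({1..n} - S')"
    using finite_same_card_bij[OF finI] by (metis finite_Diff finite_atLeastAtMost)
  define f where "f x = (if x \<in> T then h x else k x)" for x
  have fT: "bij_betw f T S'" using h by (rule bij_betw_cong[THEN iffD1, rotated]) (simp add: f_def)
  have fI: "bij_betw f I ({1..n} - S')"
    using k by (rule bij_betw_cong[THEN iffD1, rotated]) (simp add: f_def T_def)
  have "bij_betw f (T \<union> I) (S' \<union> ({1..n} - S'))"
    by (rule bij_betw_combine[OF fT fI]) blast
  moreover have "T \<union> I = V" using IV by (auto simp: T_def)
  moreover have "S' \<union> ({1..n} - S') = {1..n}" using S' SS by blast
  ultimately have fb: "bij_betw f V {1..card V}" using assms(2) by simp
  have key: "gcd (f u) (f v) dvd n" if "E u v" "u \<in> T" for u v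
  proof -
    have uv: "u \<in> V" "v \<in> V" using inV[OF that(1)] by auto
    have "u \<noteq> v" using irr that(1) by blast
    hence ne: "f v \<noteq> f u" using fb uv by (metis bij_betw_iff_bijections)
    have fu: "f u \<in> S" using fT that(2) S'(1) bij_betwE by blast
    have fv: "f v \<in> {1..n}" using fb uv assms(2) bij_betwE by blast
    show ?thesis using fu fv ne full_deg by (auto simp: S_def)
  qed
  have "gcd (f u) (f v) dvd card V" if "E u v" for u v
  proof (cases "u \<in> T")
    case True thus ?thesis using key that assms(2) by simp
  next
    case False
    have "u \<in> V" "v \<in> V" using inV[OF that] by auto
    hence "v \<in> T" using False Iind that by (auto simp: T_def)
    thus ?thesis using key[OF sym[OF that]] assms(2) by (simp add: gcd.commute)
  qed
  thus ?thesis unfolding diophantine_def using fb by blast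
qed

end
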